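(* Consider binary-tree pivotal sampling on a fixed full binary tree $T$ under the standing assumptions. Let $v$ be a non-root internal node and $b\in\{0,1\}$ with $\Pr[\xi_v=b]>0$. Let $\boldsymbol\xi_I$ be the vector of statuses $\xi_u$ of all nodes $u\ne v$ in the subtree rooted at $v$, and $\boldsymbol\xi_O$ the vector of statuses of all non-root nodes outside this subtree. Then, conditionally on $\xi_v=b$, $\boldsymbol\xi_I$ and $\boldsymbol\xi_O$ are independent: for all binary vectors $\mathbf x_I,\mathbf x_O$ of matching lengths, $$\Pr[\boldsymbol\xi_I=\mathbf x_I,\boldsymbol\xi_O=\mathbf x_O\mid\xi_v=b]=\Pr[\boldsymbol\xi_I=\mathbf x_I\mid\xi_v=b]\,\Pr[\boldsymbol\xi_O=\mathbf x_O\mid\xi_v=b].$$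
   Context: Binary-tree pivotal sampling: let $T$ be a full binary tree whose leaves are identified with an index set, and let $q_i\in[0,1]$ be leaf probabilities with integer sum. Each node can store an index together with a current probability; initially each leaf $i$ stores $i$ with probability $q_i$, and the output set $\mathcal S_{\rm out}$ is empty. Repeatedly choose two sibling nodes that both store indices, say $i$ with probability $q_i$ and $j$ with probability $q_j$, with parent $P$, and remove them. If $q_i+q_j\le1$: with probability $q_i/(q_i+q_j)$ store $i$ at $P$ with probability $q_i+q_j$ ($j$ is rejected), otherwise store $j$ at $P$ with probability $q_i+q_j$ ($i$ is rejected). If $q_i+q_j>1$: with probability $(1-q_i)/(2-q_i-q_j)$ put $j$ into $\mathcal S_{\rm out}$ and store $i$ at $P$ with probability $q_i+q_j-1$; otherwise put $i$ into $\mathcal S_{\rm out}$ and store $j$ at $P$ with probability $q_i+q_j-1$. When only the root stores an index, put it into $\mathcal S_{\rm out}$ iff its probability is $1$. Carried probabilities: $\pi_v=q_i$ for a leaf $v$ with index $i$; for an internal node $v$ with children $v_1,v_2$, $\pi_v=\pi_{v_1}+\pi_{v_2}$ if $\pi_{v_1}+\pi_{v_2}<1$ and $\pi_v=\pi_{v_1}+\pi_{v_2}-1$ if $\pi_{v_1}+\pi_{v_2}>1$. Node statuses: for a non-root node $v$, $\xi_v\in\{0,1\}$ is the indicator that the index stored at $v$ (for a leaf, its own index; for an internal node, the index promoted to $v$ by the comparison of its children) belongs to the final output $\mathcal S_{\rm out}$. Standing assumptions: all leaf probabilities lie in $(0,1)$; for every internal non-root node $v$ with children $v_1,v_2$, $\pi_{v_1}+\pi_{v_2}\ne1$;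 for the two children $r_1,r_2$ of the root, $\pi_{r_1}+\pi_{r_2}=1$. *)

theory Defs
  imports "HOL-Probability.Probability"
begin

text \<open>Full binary trees whose leaves carry indices (natural numbers).
  Nodes are addressed by paths from the root: [] is the root,
  False # p goes to the left child, True # p to the right child.\<close>

datatype tree = Leaf nat | Node tree tree

fun leaves :: "tree \<Rightarrow> nat list" where
  "leaves (Leaf i) = [i]"
| "leaves (Node l r) = leaves l @ leaves r"

fun subtree_at :: "tree \<Rightarrow> bool list \<Rightarrow> tree option" where
  "subtree_at t [] = Some t"
| "subtree_at (Leaf i) (c # p) = None"
| "subtree_at (Node l r) (c # p) = subtree_at (if c then r else l) p"

definition nodes :: "tree \<Rightarrow> bool list set" where
  "nodes t = {p. subtree_at t p \<noteq> None}"

definition internal_nodes :: "tree \<Rightarrow> bool list set" where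
  "internal_nodes t = {p. \<exists>l r. subtree_at t p = Some (Node l r)}"

text \<open>Carried probabilities \<pi>_v.  At a sum equal to 1 (only possible at the root,
  by the standing assumptions) the value is the sum, as in the algorithm.\<close>

fun carried :: "(nat \<Rightarrow> real) \<Rightarrow> tree \<Rightarrow> real" where
  "carried q (Leaf i) = q i"
| "carried q (Node l r) =
     (let s = carried q l + carried q r in if s \<le> 1 then s else s - 1)"

text \<open>State of a processed subtree: (index stored at its root, its current probability,
  output set produced inside the subtree, map from node paths (relative to the subtree
  root) to the index stored at that node).\<close>

type_synonym pstate = "nat \<times> real \<times> nat set \<times> (bool list \<Rightarrow> nat option)"

definition node_st ::
  "nat \<Rightarrow> (bool list \<Rightarrow> nat option) \<Rightarrow> (bool list \<Rightarrow> nat option) \<Rightarrow> bool list \<Rightarrow> nat option" where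
  "node_st k stL stR p =
     (case p of [] \<Rightarrow> Some k | c # p' \<Rightarrow> (if c then stR p' else stL p'))"

definition pivot_step :: "pstate \<Rightarrow> pstate \<Rightarrow> pstate pmf" where
  "pivot_step a b =
     (case a of (i, qi, Sl, stL) \<Rightarrow> case b of (j, qj, Sr, stR) \<Rightarrow>
       if qi + qj \<le> 1 then
         map_pmf (\<lambda>c. if c then (i, qi + qj, Sl \<union> Sr, node_st i stL stR)
                         else (j, qi + qj, Sl \<union> Sr, node_st j stL stR))
                 (bernoulli_pmf (qi / (qi + qj)))
       else
         map_pmf (\<lambda>c. if c then (i, qi + qj - 1, Sl \<union> Sr \<union> {j}, node_st i stL stR)
                         else (j, qi + qj - 1, Sl \<union> Sr \<union> {i}, node_st j stL stR))
                 (bernoulli_pmf ((1 - qi) / (2 - qi - qj))))"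

text \<open>Bottom-up pivotal sampling on a subtree (the random choices at different
  comparisons are independent, so the order of the comparisons is irrelevant).\<close>

fun pivotal :: "(nat \<Rightarrow> real) \<Rightarrow> tree \<Rightarrow> pstate pmf" where
  "pivotal q (Leaf i) = return_pmf (i, q i, {}, \<lambda>p. if p = [] then Some i else None)"
| "pivotal q (Node l r) =
     bind_pmf (pivotal q l) (\<lambda>a. bind_pmf (pivotal q r) (\<lambda>b. pivot_step a b))"

definition S_out :: "pstate \<Rightarrow> nat set" where
  "S_out \<omega> = (case \<omega> of (i, p, S, st) \<Rightarrow> S \<union> (if p = 1 then {i} else {}))"

definition status :: "pstate \<Rightarrow> bool list \<Rightarrow> bool" where
  "status \<omega> u = (case \<omega> of (i, p, S, st) \<Rightarrow> the (st u) \<in> S_out \<omega>)"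

definition standing_assumptions :: "(nat \<Rightarrow> real) \<Rightarrow> tree \<Rightarrow> bool" where
  "standing_assumptions q T \<longleftrightarrow>
     distinct (leaves T) \<and>
     (\<forall>i \<in> set (leaves T). 0 < q i \<and> q i < 1) \<and>
     (\<Sum>i \<in> set (leaves T). q i) \<in> \<int> \<and>
     (\<forall>p l r. p \<noteq> [] \<longrightarrow> subtree_at T p = Some (Node l r) \<longrightarrow> carried q l + carried q r \<noteq> 1) \<and>
     (\<exists>l r. T = Node l r \<and> carried q l + carried q r = 1)"

definition inside_nodes :: "tree \<Rightarrow> bool list \<Rightarrow> bool list set" where
  "inside_nodes T v = {u \<in> nodes T. (\<exists>w. u = v @ w) \<and> u \<noteq> v}"

definition outside_nodes :: "tree \<Rightarrow> bool list \<Rightarrow> bool list set" where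
  "outside_nodes T v = {u \<in> nodes T. u \<noteq> [] \<and> \<not> (\<exists>w. u = v @ w)}"

end

theory Submission imports Defs begin

definition stepfn :: "pstate \<Rightarrow> pstate \<Rightarrow> bool \<Rightarrow> pstate" where
 "stepfn a b c = (case a of (i, qi, Sl, stL) \<Rightarrow> case b of (j, qj, Sr, stR) \<Rightarrow>
   if qi + qj \<le> 1 then (if c then (i, qi+qj, Sl\<union>Sr, node_st i stL stR) else (j, qi+qj, Sl\<union>Sr, node_st j stL stR))
   else (if c then (i, qi+qj-1, Sl\<union>Sr\<union>{j}, node_st i stL stR) else (j, qi+qj-1, Sl\<union>Sr\<union>{i}, node_st j stL stR)))"

definition par :: "real \<Rightarrow> real \<Rightarrow> real" where
  "par x y = (if x+y \<le> 1 then x/(x+y) else (1-x)/(2-x-y))"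

lemma pivot_step_alt: "pivot_step a b = map_pmf (stepfn a b) (bernoulli_pmf (par (fst (snd a)) (fst (snd b))))"
  by (cases a; cases b) (auto simp: pivot_step_def stepfn_def par_def intro: map_pmf_cong)

definition lab :: "pstate \<Rightarrow> nat set" where
  "lab \<omega> = (case \<omega> of (i,p,S,st) \<Rightarrow> insert i (S \<union> {j. \<exists>w. st w = Some j}))"

lemma node_st_ran: "node_st k L R w = Some x \<Longrightarrow> x = k \<or> (\<exists>w. L w = Some x) \<or> (\<exists>w. R w = Some x)"
  by (cases w) (auto simp: node_st_def split: if_splits)

lemma lab_stepfn: "lab (stepfn a b c) \<subseteq> lab a \<union> lab b"
  by (cases a; cases b) (auto simp: stepfn_def lab_def dest!: node_st_ran)

lemma lab_piv: "\<omega> \<in> set_pmf (pivotal q t) \<Longrightarrow> lab \<omega> \<subseteq> set (leaves t)"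
proof (induction t arbitrary: \<omega>)
  case (Leaf i) then show ?case by (auto simp: lab_def)
next
  case (Node l r)
  then obtain a b c where a: "a \<in> set_pmf (pivotal q l)" and b: "b \<in> set_pmf (pivotal q r)"
    and w: "\<omega> = stepfn a b c" by (auto simp: pivot_step_alt)
  show ?case using lab_stepfn[of a b c] Node.IH(1)[OF a] Node.IH(2)[OF b] w by auto
qed

lemma nodes_Node: "c # w \<in> nodes (Node l r) \<longleftrightarrow> w \<in> nodes (if c then r else l)"
  by (simp add: nodes_def)

lemma nodes_Leaf: "w \<in> nodes (Leaf i) \<longleftrightarrow> w = []"
  by (cases w) (auto simp: nodes_def)

definition inv :: "(nat \<Rightarrow> real) \<Rightarrow> tree \<Rightarrow> pstate \<Rightarrow> bool" where
  "inv q t \<omega> = (case \<omega> of (i,p,S,st) \<Rightarrow> i \<notin> S \<and> st [] = Some i \<and> (\<forall>w\<in>nodes t. st w \<noteq> None) \<and> p = carried q t)"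

lemma inv_piv: "distinct (leaves t) \<Longrightarrow> \<omega> \<in> set_pmf (pivotal q t) \<Longrightarrow> inv q t \<omega>"
proof (induction t arbitrary: \<omega>)
  case (Leaf i) then show ?case by (auto simp: inv_def nodes_Leaf)
next
  case (Node l r)
  then obtain a b c where a: "a \<in> set_pmf (pivotal q l)" and b: "b \<in> set_pmf (pivotal q r)"
    and w: "\<omega> = stepfn a b c" by (auto simp: pivot_step_alt)
  have d: "distinct (leaves l)" "distinct (leaves r)" "set (leaves l) \<inter> set (leaves r) = {}"
    using Node.prems by auto
  have ia: "inv q l a" and ib: "inv q r b" using Node.IH d a b by auto
  have la: "lab a \<subseteq> set (leaves l)" and lb: "lab b \<subseteq> set (leaves r)" using lab_piv a b by auto
  obtain i pa Sa sta where A: "a = (i,pa,Sa,sta)" by (cases a) auto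
  obtain j pb Sb stb where B: "b = (j,pb,Sb,stb)" by (cases b) auto
  have nd: "\<forall>w \<in> nodes (Node l r). node_st k sta stb w \<noteq> None" for k
  proof
    fix w assume "w \<in> nodes (Node l r)"
    then show "node_st k sta stb w \<noteq> None"
      using ia ib A B by (cases w) (auto simp: nodes_Node inv_def node_st_def split: if_splits)
  qed
  show ?case using w A B ia ib la lb d nd
    by (auto simp: stepfn_def inv_def lab_def node_st_def Let_def)
qed

fun G :: "tree \<Rightarrow> bool list \<Rightarrow> pstate \<Rightarrow> (pstate \<times> bool) list \<Rightarrow> pstate" where
  "G (Node l r) (c#v) x ((s,coin)#ks) = (if c then stepfn s (G r v x ks) coin else stepfn (G l v x ks) s coin)"
| "G _ _ x _ = x"

fun K :: "(nat \<Rightarrow> real) \<Rightarrow> tree \<Rightarrow> bool list \<Rightarrow> (pstate \<times> bool) list pmf" where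
  "K q (Node l r) (c#v) = bind_pmf (K q (if c then r else l) v) (\<lambda>ks. bind_pmf (pivotal q (if c then l else r))
      (\<lambda>s. map_pmf (\<lambda>coin. (s,coin)#ks) (bernoulli_pmf (par (carried q l) (carried q r)))))"
| "K q _ _ = return_pmf []"

lemma prob_piv: "\<omega> \<in> set_pmf (pivotal q T) \<Longrightarrow> fst (snd \<omega>) = carried q T"
proof (induction T arbitrary: \<omega>)
  case (Leaf i) then show ?case by auto
next
  case (Node l r)
  then obtain a b c where a: "a \<in> set_pmf (pivotal q l)" and b: "b \<in> set_pmf (pivotal q r)"
    and w: "\<omega> = stepfn a b c" by (auto simp: pivot_step_alt)
  show ?case using Node.IH(1)[OF a] Node.IH(2)[OF b] w
    by (cases a; cases b) (auto simp: stepfn_def Let_def)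
qed

lemma decomp: "subtree_at T v = Some t \<Longrightarrow>
   pivotal q T = bind_pmf (pivotal q t) (\<lambda>x. map_pmf (G T v x) (K q T v))"
proof (induction v arbitrary: T)
  case Nil
  then show ?case by (simp add: bind_return_pmf')
next
  case (Cons c v)
  then obtain l r where T: "T = Node l r" by (cases T) auto
  show ?case
  proof (cases c)
    case True
    have st: "subtree_at r v = Some t" using Cons.prems T True by simp
    note IH = Cons.IH[OF st]
    have "pivotal q T = bind_pmf (pivotal q l) (\<lambda>a. bind_pmf (pivotal q r) (\<lambda>b. pivot_step a b))"
      using T by simp
    also have "\<dots> = bind_pmf (pivotal q l) (\<lambda>a. bind_pmf (pivotal q t) (\<lambda>x. bind_pmf (K q r v) (\<lambda>ks.
          pivot_step a (G r v x ks))))"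
      by (simp add: IH map_pmf_def bind_assoc_pmf bind_return_pmf)
    also have "\<dots> = bind_pmf (pivotal q t) (\<lambda>x. bind_pmf (K q r v) (\<lambda>ks. bind_pmf (pivotal q l) (\<lambda>a.
          pivot_step a (G r v x ks))))"
      by (subst bind_commute_pmf) (simp add: bind_commute_pmf[of "pivotal q l"])
    also have "\<dots> = bind_pmf (pivotal q t) (\<lambda>x. bind_pmf (K q r v) (\<lambda>ks. bind_pmf (pivotal q l) (\<lambda>a.
          map_pmf (\<lambda>coin. stepfn a (G r v x ks) coin) (bernoulli_pmf (par (carried q l) (carried q r))))))"
    proof (intro bind_pmf_cong refl)
      fix x ks a assume x: "x \<in> set_pmf (pivotal q t)" and ks: "ks \<in> set_pmf (K q r v)"
        and a: "a \<in> set_pmf (pivotal q l)"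
      have "G r v x ks \<in> set_pmf (pivotal q r)" using x ks by (auto simp: IH)
      then show "pivot_step a (G r v x ks) = map_pmf (\<lambda>coin. stepfn a (G r v x ks) coin) (bernoulli_pmf (par (carried q l) (carried q r)))"
        using a by (simp add: pivot_step_alt prob_piv)
    qed
    also have "\<dots> = bind_pmf (pivotal q t) (\<lambda>x. map_pmf (G T (c#v) x) (K q T (c#v)))"
      using T True by (simp add: map_bind_pmf map_pmf_comp)
    finally show ?thesis .
  next
    case False
    have st: "subtree_at l v = Some t" using Cons.prems T False by simp
    note IH = Cons.IH[OF st]
    have "pivotal q T = bind_pmf (pivotal q l) (\<lambda>a. bind_pmf (pivotal q r) (\<lambda>b. pivot_step a b))"
      using T by simp
    also have "\<dots> = bind_pmf (pivotal q t) (\<lambda>x. bind_pmf (K q l v) (\<lambda>ks. bind_pmf (pivotal q r) (\<lambda>b.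
          pivot_step (G l v x ks) b)))"
      by (simp add: IH map_pmf_def bind_assoc_pmf bind_return_pmf)
    also have "\<dots> = bind_pmf (pivotal q t) (\<lambda>x. bind_pmf (K q l v) (\<lambda>ks. bind_pmf (pivotal q r) (\<lambda>b.
          map_pmf (\<lambda>coin. stepfn (G l v x ks) b coin) (bernoulli_pmf (par (carried q l) (carried q r))))))"
    proof (intro bind_pmf_cong refl)
      fix x ks b assume x: "x \<in> set_pmf (pivotal q t)" and ks: "ks \<in> set_pmf (K q l v)"
        and b: "b \<in> set_pmf (pivotal q r)"
      have "G l v x ks \<in> set_pmf (pivotal q l)" using x ks by (auto simp: IH)
      then show "pivot_step (G l v x ks) b = map_pmf (\<lambda>coin. stepfn (G l v x ks) b coin) (bernoulli_pmf (par (carried q l) (carried q r)))"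
        using b by (simp add: pivot_step_alt prob_piv)
    qed
    also have "\<dots> = bind_pmf (pivotal q t) (\<lambda>x. map_pmf (G T (c#v) x) (K q T (c#v)))"
      using T False by (simp add: map_bind_pmf map_pmf_comp)
    finally show ?thesis .
  qed
qed


lemma subtree_append: "subtree_at T v = Some t \<Longrightarrow> subtree_at T (v @ w) = subtree_at t w"
  by (induction v arbitrary: T) (auto elim: subtree_at.elims)

lemma subtree_leaves: "subtree_at T v = Some t \<Longrightarrow> set (leaves t) \<subseteq> set (leaves T) \<and> (distinct (leaves T) \<longrightarrow> distinct (leaves t))"
proof (induction v arbitrary: T)
  case Nil then show ?case by simp
next
  case (Cons c v)
  then obtain l r where T: "T = Node l r" by (cases T) auto
  then show ?case using Cons by (cases c) force+
qed

definition lf :: "nat \<Rightarrow> real \<Rightarrow> pstate" where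
  "lf i p = (i, p, {}, \<lambda>w. if w = [] then Some i else None)"

definition comb :: "bool list \<Rightarrow> pstate \<Rightarrow> pstate \<Rightarrow> pstate" where
  "comb v x \<omega> = (case x of (i,p,Sx,stx) \<Rightarrow> case \<omega> of (i',p',S',st') \<Rightarrow>
     (i',p',Sx\<union>S', \<lambda>u. if \<exists>w. u = v@w then stx (drop (length v) u) else st' u))"

lemma G_comb: "subtree_at T v \<noteq> None \<Longrightarrow> length ks = length v \<Longrightarrow>
   G T v x ks = comb v x (G T v (lf (fst x) (fst (snd x))) ks)"
proof (induction v arbitrary: T ks)
  case Nil
  then show ?case by (cases x) (auto simp: comb_def lf_def)
next
  case (Cons c v)
  then obtain l r where T: "T = Node l r" by (cases T) auto
  from Cons obtain s coin ks' where ks: "ks = (s,coin)#ks'" by (cases ks) auto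
  obtain i p Sx stx where X: "x = (i,p,Sx,stx)" by (cases x) auto
  show ?case
  proof (cases c)
    case True
    have IH: "G r v x ks' = comb v x (G r v (lf i p) ks')" using Cons T True ks X by auto
    obtain i' p' S' st' where E: "G r v (lf i p) ks' = (i',p',S',st')" by (cases "G r v (lf i p) ks'") auto
    obtain j pj Sj stj where Ss: "s = (j,pj,Sj,stj)" by (cases s) auto
    show ?thesis using IH E Ss True T ks X
      by (auto simp: comb_def stepfn_def node_st_def fun_eq_iff split: list.splits)
  next
    case False
    have IH: "G l v x ks' = comb v x (G l v (lf i p) ks')" using Cons T False ks X by auto
    obtain i' p' S' st' where E: "G l v (lf i p) ks' = (i',p',S',st')" by (cases "G l v (lf i p) ks'") auto
    obtain j pj Sj stj where Ss: "s = (j,pj,Sj,stj)" by (cases s) auto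
    show ?thesis using IH E Ss False T ks X
      by (auto simp: comb_def stepfn_def node_st_def fun_eq_iff split: list.splits)
  qed
qed


definition ren :: "(nat \<Rightarrow> nat) \<Rightarrow> pstate \<Rightarrow> pstate" where
  "ren f \<omega> = (case \<omega> of (i,p,S,st) \<Rightarrow> (f i, p, f ` S, \<lambda>w. map_option f (st w)))"

lemma ren_stepfn: "stepfn (ren f a) (ren f b) c = ren f (stepfn a b c)"
  by (cases a; cases b) (auto simp: stepfn_def ren_def node_st_def fun_eq_iff image_Un split: list.splits)

lemma G_ren: "G T v (ren f x) (map (\<lambda>(s,c). (ren f s, c)) ks) = ren f (G T v x ks)"
proof (induction v arbitrary: T ks)
  case Nil then show ?case by (cases T) auto
next
  case (Cons c v)
  show ?case
  proof (cases T)
    case (Leaf i) then show ?thesis by simp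
  next
    case (Node l r)
    then show ?thesis
    proof (cases ks)
      case Nil then show ?thesis using Node by simp
    next
      case (Cons a ks')
      then show ?thesis using Node Cons.IH by (cases a) (auto simp: ren_stepfn[symmetric])
    qed
  qed
qed

lemma ren_id: "(\<forall>j\<in>lab \<omega>. f j = j) \<Longrightarrow> ren f \<omega> = \<omega>"
proof -
  assume a: "\<forall>j\<in>lab \<omega>. f j = j"
  obtain i p S st where W: "\<omega> = (i,p,S,st)" by (cases \<omega>) auto
  have "map_option f (st w) = st w" for w using a W by (cases "st w") (auto simp: lab_def)
  moreover have "f ` S = S" using a W by (force simp: lab_def image_iff)
  ultimately show ?thesis using a W by (auto simp: ren_def lab_def fun_eq_iff)
qed

lemma S_out_ren: "S_out (ren f \<omega>) = f ` S_out \<omega>"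
  by (cases \<omega>) (auto simp: S_out_def ren_def)

lemma status_ren: "inj f \<Longrightarrow> snd (snd (snd \<omega>)) u \<noteq> None \<Longrightarrow> status (ren f \<omega>) u = status \<omega> u"
proof -
  assume f: "inj f" and n: "snd (snd (snd \<omega>)) u \<noteq> None"
  obtain i p S st where W: "\<omega> = (i,p,S,st)" by (cases \<omega>) auto
  from n W obtain j where j: "st u = Some j" by auto
  have "status (ren f \<omega>) u = (f j \<in> f ` S_out \<omega>)"
    using W j by (simp add: status_def S_out_ren[symmetric]) (simp add: ren_def)
  also have "\<dots> = (j \<in> S_out \<omega>)" using f by (simp add: inj_image_mem_iff)
  finally show ?thesis using W j by (simp add: status_def)
qed

lemma lab_G: "lab (G T v x ks) \<subseteq> lab x \<union> \<Union> (lab ` fst ` set ks)"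
proof (induction v arbitrary: T ks)
  case Nil then show ?case by (cases T) auto
next
  case (Cons c v)
  show ?case
  proof (cases T)
    case (Leaf i) then show ?thesis by simp
  next
    case (Node l r)
    then show ?thesis
    proof (cases ks)
      case Nil then show ?thesis using Node by simp
    next
      case (Cons a ks')
      obtain s co where a: "a = (s,co)" by (cases a) auto
      show ?thesis using Node Cons a Cons.IH[of r ks'] Cons.IH[of l ks']
        lab_stepfn[of s "G r v x ks'" co] lab_stepfn[of "G l v x ks'" s co] by auto
    qed
  qed
qed

lemma K_supp: "subtree_at T v = Some t \<Longrightarrow> distinct (leaves T) \<Longrightarrow> ks \<in> set_pmf (K q T v) \<Longrightarrow>
   length ks = length v \<and> (\<forall>s\<in>fst ` set ks. lab s \<inter> set (leaves t) = {})"
proof (induction v arbitrary: T ks)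
  case Nil then show ?case by simp
next
  case (Cons c v)
  then obtain l r where T: "T = Node l r" by (cases T) auto
  show ?case
  proof (cases c)
    case True
    from Cons.prems T True obtain ks' s co where ks: "ks = (s,co)#ks'" and ks': "ks' \<in> set_pmf (K q r v)"
      and s: "s \<in> set_pmf (pivotal q l)" by auto
    have st: "subtree_at r v = Some t" using Cons.prems T True by simp
    have "set (leaves t) \<subseteq> set (leaves r)" using subtree_leaves[OF st] by auto
    moreover have "lab s \<subseteq> set (leaves l)" using lab_piv[OF s] .
    moreover have "set (leaves l) \<inter> set (leaves r) = {}" using Cons.prems T by auto
    ultimately show ?thesis using Cons.IH[OF st _ ks'] Cons.prems T ks by auto
  next
    case False
    from Cons.prems T False obtain ks' s co where ks: "ks = (s,co)#ks'" and ks': "ks' \<in> set_pmf (K q l v)"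
      and s: "s \<in> set_pmf (pivotal q r)" by auto
    have st: "subtree_at l v = Some t" using Cons.prems T False by simp
    have "set (leaves t) \<subseteq> set (leaves l)" using subtree_leaves[OF st] by auto
    moreover have "lab s \<subseteq> set (leaves r)" using lab_piv[OF s] .
    moreover have "set (leaves l) \<inter> set (leaves r) = {}" using Cons.prems T by auto
    ultimately show ?thesis using Cons.IH[OF st _ ks'] Cons.prems T ks by auto
  qed
qed


lemma key:
  assumes d: "distinct (leaves T)" and st: "subtree_at T v = Some t"
    and x: "x \<in> set_pmf (pivotal q t)" and k: "k \<in> set_pmf (K q T v)"
    and i0: "i0 \<in> set (leaves t)"
  shows "status (G T v x k) v = status (G T v (lf i0 (carried q t)) k) v
    \<and> (\<forall>u\<in>outside_nodes T v. status (G T v x k) u = status (G T v (lf i0 (carried q t)) k) u)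
    \<and> (\<forall>u\<in>inside_nodes T v. status (G T v x k) u =
          (the (snd (snd (snd x)) (drop (length v) u)) \<in> fst (snd (snd x)) \<or>
           (the (snd (snd (snd x)) (drop (length v) u)) = fst x \<and> status (G T v (lf i0 (carried q t)) k) v)))"
proof -
  define p0 where "p0 = carried q t"
  define \<omega>0 where "\<omega>0 = G T v (lf i0 p0) k"
  obtain i px Sx stx where X: "x = (i,px,Sx,stx)" by (cases x) auto
  have dt: "distinct (leaves t)" and Lsub: "set (leaves t) \<subseteq> set (leaves T)" using subtree_leaves[OF st] d by auto
  have ix: "inv q t x" using inv_piv[OF dt x] .
  then have iS: "i \<notin> Sx" and st0: "stx [] = Some i" and stn: "\<forall>w\<in>nodes t. stx w \<noteq> None"
    and px: "px = p0" using X by (auto simp: inv_def p0_def)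
  have labx: "lab x \<subseteq> set (leaves t)" using lab_piv[OF x] .
  then have SxL: "Sx \<subseteq> set (leaves t)" and iL: "i \<in> set (leaves t)"
    and stxL: "\<And>w j. stx w = Some j \<Longrightarrow> j \<in> set (leaves t)" using X by (auto simp: lab_def)
  have ks: "length k = length v" and kl: "\<forall>s\<in>fst ` set k. lab s \<inter> set (leaves t) = {}"
    using K_supp[OF st d k] by auto
  define Lk where "Lk = \<Union> (lab ` fst ` set k)"
  have LkL: "Lk \<inter> set (leaves t) = {}" using kl by (auto simp: Lk_def)
  define \<omega>1 where "\<omega>1 = G T v (lf i p0) k"
  obtain i1 p1 S1 st1 where W1: "\<omega>1 = (i1,p1,S1,st1)" by (cases \<omega>1) auto
  have sn: "subtree_at T v \<noteq> None" using st by simp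
  have GX: "G T v x k = comb v x \<omega>1" using G_comb[OF sn ks, of x] X px by (simp add: \<omega>1_def)
  have "\<omega>1 = comb v (lf i p0) \<omega>1" using G_comb[OF sn ks, of "lf i p0"] by (simp add: \<omega>1_def lf_def)
  then have st1v: "st1 v = Some i" using W1 by (simp add: comb_def lf_def fun_eq_iff) (metis append_Nil2 drop_all order_refl)
  have lab1: "lab \<omega>1 \<subseteq> insert i Lk" proof -
    have "lab (lf i p0) = {i}" by (auto simp: lf_def lab_def split: if_splits)
    then show ?thesis using lab_G[of T v "lf i p0" k] unfolding \<omega>1_def Lk_def by auto
  qed
  have Sout1: "S_out \<omega>1 \<subseteq> insert i Lk" using lab1 W1 by (auto simp: S_out_def lab_def)
  have st1L: "\<And>u j. st1 u = Some j \<Longrightarrow> j \<in> insert i Lk" using lab1 W1 by (auto simp: lab_def)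
  define \<omega> where "\<omega> = G T v x k"
  have W: "\<omega> = (i1,p1,Sx\<union>S1, \<lambda>u. if \<exists>w. u = v@w then stx (drop (length v) u) else st1 u)"
    using GX W1 X by (simp add: \<omega>_def comb_def)
  have Sout: "S_out \<omega> = Sx \<union> S_out \<omega>1" using W W1 by (auto simp: S_out_def)
  have "\<omega> \<in> set_pmf (pivotal q T)" using x k by (auto simp: decomp[OF st] \<omega>_def)
  then have iw: "inv q T \<omega>" using inv_piv d by blast
  then have wn: "\<And>u. u \<in> nodes T \<Longrightarrow> snd (snd (snd \<omega>)) u \<noteq> None" by (cases \<omega>) (auto simp: inv_def)
  define f where "f = (\<lambda>j::nat. if j = i then i0 else if j = i0 then i else j)"
  have inj: "inj f" unfolding f_def by (auto intro!: injI split: if_splits)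
  have "map (\<lambda>(s,c). (ren f s, c)) k = k"
  proof (rule map_idI)
    fix a assume a: "a \<in> set k"
    then have "lab (fst a) \<inter> set (leaves t) = {}" using kl by auto
    then have "\<forall>j\<in>lab (fst a). f j = j" using iL i0 by (auto simp: f_def)
    then show "(case a of (s,c) \<Rightarrow> (ren f s, c)) = a" using ren_id by (cases a) auto
  qed
  moreover have "ren f (lf i p0) = lf i0 p0" by (auto simp: ren_def lf_def f_def fun_eq_iff)
  ultimately have R: "\<omega>0 = ren f \<omega>1" using G_ren[of T v f "lf i p0" k] by (simp add: \<omega>0_def \<omega>1_def)
  have stR: "\<And>u. st1 u \<noteq> None \<Longrightarrow> status \<omega>0 u = status \<omega>1 u" using R status_ren[OF inj] W1 by auto
  have sv1: "status \<omega>1 v = (i \<in> S_out \<omega>1)" using W1 st1v by (simp add: status_def)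
  have "snd (snd (snd \<omega>)) v = Some i" using W st0 by auto
  then have sv: "status \<omega> v = (i \<in> S_out \<omega>1)" using Sout iS W by (simp add: status_def)
  have A: "status \<omega> v = status \<omega>0 v" using sv sv1 stR[of v] st1v by simp
  have B: "\<forall>u\<in>outside_nodes T v. status \<omega> u = status \<omega>0 u"
  proof
    fix u assume u: "u \<in> outside_nodes T v"
    then have un: "u \<in> nodes T" and ne: "\<not> (\<exists>w. u = v@w)" by (auto simp: outside_nodes_def)
    have "snd (snd (snd \<omega>)) u = st1 u" using W ne by simp
    then obtain j where j: "st1 u = Some j" using wn[OF un] by auto
    have "j \<notin> Sx" using st1L[OF j] SxL LkL iS by auto
    then have "status \<omega> u = (j \<in> S_out \<omega>1)" using W j ne Sout by (simp add: status_def)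
    also have "\<dots> = status \<omega>1 u" using W1 j by (simp add: status_def)
    finally show "status \<omega> u = status \<omega>0 u" using stR[of u] j by simp
  qed
  have C: "\<forall>u\<in>inside_nodes T v. status \<omega> u =
          (the (stx (drop (length v) u)) \<in> Sx \<or> (the (stx (drop (length v) u)) = i \<and> status \<omega>0 v))"
  proof
    fix u assume u: "u \<in> inside_nodes T v"
    then obtain w where uw: "u = v@w" and un: "u \<in> nodes T" by (auto simp: inside_nodes_def)
    have e: "snd (snd (snd \<omega>)) u = stx w" using W uw by simp
    then obtain j where j: "stx w = Some j" using wn[OF un] by auto
    have jL: "j \<in> set (leaves t)" using stxL[OF j] .
    have "status \<omega> u = (j \<in> Sx \<union> S_out \<omega>1)" using W j uw Sout e by (simp add: status_def)
    also have "\<dots> = (j \<in> Sx \<or> (j = i \<and> i \<in> S_out \<omega>1))" using Sout1 jL LkL by auto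
    finally show "status \<omega> u = (the (stx (drop (length v) u)) \<in> Sx \<or> (the (stx (drop (length v) u)) = i \<and> status \<omega>0 v))"
      using uw j A sv by simp
  qed
  show ?thesis using A B C X by (simp add: \<omega>_def \<omega>0_def p0_def)
qed


lemma prob_cong_supp: "(\<And>\<omega>. \<omega> \<in> set_pmf M \<Longrightarrow> \<omega> \<in> E \<longleftrightarrow> \<omega> \<in> E') \<Longrightarrow>
    measure_pmf.prob M E = measure_pmf.prob M E'"
  by (metis (no_types, lifting) Int_iff measure_Int_set_pmf subsetI subset_antisym)

lemma prob_split:
  assumes "\<And>x k. x \<in> set_pmf A \<Longrightarrow> k \<in> set_pmf B \<Longrightarrow> g x k \<in> E \<longleftrightarrow> x \<in> X \<and> k \<in> Y"
  shows "measure_pmf.prob (bind_pmf A (\<lambda>x. map_pmf (g x) B)) E = measure_pmf.prob A X * measure_pmf.prob B Y"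
proof -
  have eq: "bind_pmf A (\<lambda>x. map_pmf (g x) B) = map_pmf (\<lambda>(x,k). g x k) (pair_pmf A B)"
    by (simp add: pair_pmf_def map_pmf_def bind_assoc_pmf bind_return_pmf)
  have "measure_pmf.prob (pair_pmf A B) ((\<lambda>(x,k). g x k) -` E) =
        measure_pmf.prob (pair_pmf A B) ((X \<inter> set_pmf A) \<times> (Y \<inter> set_pmf B))"
    by (rule prob_cong_supp) (use assms in auto)
  also have "\<dots> = measure_pmf.prob A (X \<inter> set_pmf A) * measure_pmf.prob B (Y \<inter> set_pmf B)"
    by (rule measure_pmf_prob_product) (auto intro: countable_Int2)
  finally show ?thesis using eq by (simp add: measure_Int_set_pmf)
qed

lemma leaves_ne: "leaves t \<noteq> []"
  by (induction t) auto

theorem propositionE4: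
  fixes T :: tree and q :: "nat \<Rightarrow> real" and v :: "bool list" and b :: bool
    and xI xO :: "bool list \<Rightarrow> bool"
  assumes "standing_assumptions q T"
    and "v \<in> internal_nodes T" and "v \<noteq> []"
    and "measure_pmf.prob (pivotal q T) {\<omega>. status \<omega> v = b} > 0"
  shows
    "measure_pmf.prob (pivotal q T)
        ({\<omega>. \<forall>u \<in> inside_nodes T v. status \<omega> u = xI u}
         \<inter> {\<omega>. \<forall>u \<in> outside_nodes T v. status \<omega> u = xO u}
         \<inter> {\<omega>. status \<omega> v = b})
       / measure_pmf.prob (pivotal q T) {\<omega>. status \<omega> v = b}
     = (measure_pmf.prob (pivotal q T)
          ({\<omega>. \<forall>u \<in> inside_nodes T v. status \<omega> u = xI u} \<inter> {\<omega>. status \<omega> v = b})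
        / measure_pmf.prob (pivotal q T) {\<omega>. status \<omega> v = b})
     * (measure_pmf.prob (pivotal q T)
          ({\<omega>. \<forall>u \<in> outside_nodes T v. status \<omega> u = xO u} \<inter> {\<omega>. status \<omega> v = b})
        / measure_pmf.prob (pivotal q T) {\<omega>. status \<omega> v = b})"
proof -
  have d: "distinct (leaves T)" using assms(1) by (simp add: standing_assumptions_def)
  from assms(2) obtain l r where st: "subtree_at T v = Some (Node l r)" by (auto simp: internal_nodes_def)
  define t where "t = Node l r"
  have st: "subtree_at T v = Some t" using st by (simp add: t_def)
  define i0 where "i0 = hd (leaves t)"
  have i0: "i0 \<in> set (leaves t)" using leaves_ne[of t] by (simp add: i0_def)
  define w0 where "w0 = (\<lambda>k. G T v (lf i0 (carried q t)) k)"
  define h where "h = (\<lambda>k. status (w0 k) v)"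
  define ok where "ok = (\<lambda>k. \<forall>u\<in>outside_nodes T v. status (w0 k) u = xO u)"
  define io where "io = (\<lambda>x::pstate. \<forall>u\<in>inside_nodes T v. (the (snd (snd (snd x)) (drop (length v) u)) \<in> fst (snd (snd x)) \<or>
           (the (snd (snd (snd x)) (drop (length v) u)) = fst x \<and> b)) = xI u)"
  note P = decomp[OF st, of q]
  note kk = key[OF d st _ _ i0, folded w0_def]
  define EI where "EI = {\<omega>. \<forall>u \<in> inside_nodes T v. status \<omega> u = xI u}"
  define EO where "EO = {\<omega>. \<forall>u \<in> outside_nodes T v. status \<omega> u = xO u}"
  define EV where "EV = {\<omega>. status \<omega> v = b}"
  have KK: "status (G T v x k) v = h k \<and> (G T v x k \<in> EO \<longleftrightarrow> ok k)
      \<and> (h k = b \<longrightarrow> (G T v x k \<in> EI \<longleftrightarrow> io x))"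
    if x: "x \<in> set_pmf (pivotal q t)" and k: "k \<in> set_pmf (K q T v)" for x k
  proof -
    have A: "status (G T v x k) v = h k" and B: "\<forall>u\<in>outside_nodes T v. status (G T v x k) u = status (w0 k) u"
      and C: "\<forall>u\<in>inside_nodes T v. status (G T v x k) u =
          (the (snd (snd (snd x)) (drop (length v) u)) \<in> fst (snd (snd x)) \<or>
           (the (snd (snd (snd x)) (drop (length v) u)) = fst x \<and> h k))"
      using kk[OF x k] by (simp_all add: h_def w0_def)
    have "G T v x k \<in> EO \<longleftrightarrow> ok k" unfolding EO_def ok_def using B by simp
    moreover have "h k = b \<longrightarrow> (G T v x k \<in> EI \<longleftrightarrow> io x)"
      unfolding EI_def io_def using C by simp
    ultimately show ?thesis using A by blast
  qed
  have p1: "measure_pmf.prob (pivotal q T) (EI \<inter> EO \<inter> EV) =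
      measure_pmf.prob (pivotal q t) {x. io x} * measure_pmf.prob (K q T v) {k. ok k \<and> h k = b}"
    unfolding P by (rule prob_split) (use KK in \<open>auto simp: EV_def\<close>)
  have p2: "measure_pmf.prob (pivotal q T) EV =
      measure_pmf.prob (pivotal q t) UNIV * measure_pmf.prob (K q T v) {k. h k = b}"
    unfolding P by (rule prob_split) (use KK in \<open>auto simp: EV_def\<close>)
  have p3: "measure_pmf.prob (pivotal q T) (EI \<inter> EV) =
      measure_pmf.prob (pivotal q t) {x. io x} * measure_pmf.prob (K q T v) {k. h k = b}"
    unfolding P by (rule prob_split) (use KK in \<open>auto simp: EV_def\<close>)
  have p4: "measure_pmf.prob (pivotal q T) (EO \<inter> EV) =
      measure_pmf.prob (pivotal q t) UNIV * measure_pmf.prob (K q T v) {k. ok k \<and> h k = b}"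
    unfolding P by (rule prob_split) (use KK in \<open>auto simp: EV_def\<close>)
  have ne: "measure_pmf.prob (pivotal q T) EV \<noteq> 0" using assms(4) by (simp add: EV_def)
  have "measure_pmf.prob (pivotal q T) (EI \<inter> EO \<inter> EV) / measure_pmf.prob (pivotal q T) EV
     = (measure_pmf.prob (pivotal q T) (EI \<inter> EV) / measure_pmf.prob (pivotal q T) EV)
     * (measure_pmf.prob (pivotal q T) (EO \<inter> EV) / measure_pmf.prob (pivotal q T) EV)"
    using p1 p2 p3 p4 ne by simp
  then show ?thesis by (simp only: EI_def EO_def EV_def)
qed

end
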